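(* Let $K$ be an $n$-dimensional oriented, well-centered, manifold-like simplicial complex with boundary $\partial K$ and circumcentric dual complex, and let $p,q$ be positive integers with $p+q=n+1$. Let $\tilde{\mathcal F}^d_{p,q}=\Omega_d^p(K)\times\Omega_d^q(\star_{\mathrm i}K)\times\Omega_d^{n-p}(\partial(\star K))$ and $\tilde{\mathcal E}^d_{p,q}=\Omega_d^{n-p}(\star_{\mathrm i}K)\times\Omega_d^{n-q}(K)\times\Omega_d^{n-q}(\partial K)$, with the symmetric bilinear form $$\langle\!\langle(f_p^1,\hat f_q^1,\hat f_b^1,\hat e_p^1,e_q^1,e_b^1),(f_p^2,\hat f_q^2,\hat f_b^2,\hat e_p^2,e_q^2,e_b^2)\rangle\!\rangle_{\tilde d}=\langle\hat e_p^1\wedge f_p^2+e_q^1\wedge\hat f_q^2+\hat e_p^2\wedge f_p^1+e_q^2\wedge\hat f_q^1,K\rangle+\langle e_b^1\wedge\hat f_b^2+e_b^2\wedge\hat f_b^1,\partial K\rangle .$$ Define $\tilde{\mathcal D}_d\subset\tilde{\mathcal F}^d_{p,q}\times\tilde{\mathcal E}^d_{p,q}$ as the set of $(f_p,\hat f_q,\hat f_b,\hat e_p,e_q,e_b)$ such that $$f_p=(-1)^{pq+1}\mathbf d e_q,\qquad \hat f_q=\mathbf d_{\mathrm i}\hat e_p+\mathbf d_{\mathrm b}\hat f_b,\qquad e_b=(-1)^p\,e_q|_{\partial K}.$$ Then $\tilde{\mathcal D}_d=\tilde{\mathcal D}_d^{\perp}$ with respect to $\langle\!\langle\cdot,\cdot\rangle\!\rangle_{\tilde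 d}$, i.e. $\tilde{\mathcal D}_d$ is a Dirac structure.
   Context: Setting. $K$ is an $n$-dimensional manifold-like simplicial complex (every simplex is a face of some $n$-simplex), oriented ($n$-simplices sharing an $(n-1)$-face are coherently oriented, lower-dimensional simplices are individually oriented) and well-centered (every simplex contains its circumcenter in its interior). $\partial K$ is the $(n-1)$-dimensional boundary subcomplex: the $(n-1)$-simplices that are faces of exactly one $n$-simplex, together with all their faces. For simplices $\sigma^{j-1}\prec\sigma^{j}$ let $[\sigma^{j-1}:\sigma^{j}]\in\{\pm1\}$ be the coefficient of $\sigma^{j-1}$ in $\partial[v_0,\dots,v_j]=\sum_i(-1)^i[v_0,\dots,\widehat{v_i},\dots,v_j]$. Dual cells. Each simplex $\sigma^j\in K$ has a circumcentric interior dual $(n-j)$-cell $\star_{\mathrm i}\sigma^j$; each $\tau^j\in\partial K$ has a boundary dual $(n-1-j)$-cell $\star_{\mathrm b}\tau^j$ (its circumcentric dual within $\partial K$). Discrete forms. $\Omega_d^j(K)$ (resp. $\Omega_d^j(\partial K)$): real functions on the $j$-simplices of $K$ (resp. $\partial K$); $\Omega_d^m(\star_{\mathrm i}K)$: real functions on interior dual $m$-cells $\star_{\mathrm i}\sigma^{n-m}$; $\Omega_d^m(\partial(\star K))$: real functions on boundary dual $m$-cells $\star_{\mathrm b}\tau^{n-1-m}$, $\tau\in\partial K$. For primal $\alpha$, $\alpha|_{\partial K}$ is its restriction to simplices of $\partial K$. Derivatives. Primal: $(\mathbf d\alpha)(\sigma^{j})=\sum_{\sigma^{j-1}\prec\sigma^{j}}[\sigma^{j-1}:\sigma^{j}]\alpha(\sigma^{j-1})$.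 Dual: for $\hat\beta_{\mathrm i}\in\Omega_d^{m}(\star_{\mathrm i}K)$, $\hat\beta_{\mathrm b}\in\Omega_d^{m}(\partial(\star K))$, $m\le n-1$, with $j=n-m$: $(\mathbf d_{\mathrm i}\hat\beta_{\mathrm i})(\star_{\mathrm i}\sigma^{j-1})=(-1)^{j}\sum_{\sigma^{j}\succ\sigma^{j-1}}[\sigma^{j-1}:\sigma^{j}]\hat\beta_{\mathrm i}(\star_{\mathrm i}\sigma^{j})$, and $(\mathbf d_{\mathrm b}\hat\beta_{\mathrm b})(\star_{\mathrm i}\sigma^{j-1})=(-1)^{j-1}\hat\beta_{\mathrm b}(\star_{\mathrm b}\sigma^{j-1})$ if $\sigma^{j-1}\in\partial K$, $0$ otherwise; both lie in $\Omega_d^{m+1}(\star_{\mathrm i}K)$. Wedge pairings (extended bilinearly). For $\alpha\in\Omega_d^j(K)$, $\hat\beta\in\Omega_d^{n-j}(\star_{\mathrm i}K)$: $\langle\alpha\wedge\hat\beta,K\rangle=\sum_{\sigma^j\in K}\alpha(\sigma^j)\hat\beta(\star_{\mathrm i}\sigma^j)$, $\langle\hat\beta\wedge\alpha,K\rangle=(-1)^{j(n-j)}\langle\alpha\wedge\hat\beta,K\rangle$. For $\alpha\in\Omega_d^j(\partial K)$, $\hat\gamma\in\Omega_d^{n-1-j}(\partial(\star K))$: $\langle\alpha\wedge\hat\gamma,\partial K\rangle=\sum_{\tau^j\in\partial K}\alpha(\tau^j)\hat\gamma(\star_{\mathrm b}\tau^j)$, $\langle\hat\gamma\wedge\alpha,\partial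 K\rangle=(-1)^{j(n-1-j)}\langle\alpha\wedge\hat\gamma,\partial K\rangle$. A Dirac structure is a linear subspace $\mathcal D\subset\mathcal F\times\mathcal E$ with $\mathcal D=\mathcal D^\perp$ for the given symmetric bilinear form. *)

theory Defs
  imports "HOL-Analysis.Analysis"
begin

text \<open>Simplices are nonempty finite vertex sets; vertices carry a linear order,
  and the orientation of a simplex is encoded by a sign relative to the
  increasing vertex order.  Discrete forms (primal and dual) are real functions
  on simplices; a dual cell is indexed by the primal simplex it is dual to.\<close>

type_synonym 'v dform = "'v set \<Rightarrow> real"

definition simplices :: "'v set set \<Rightarrow> nat \<Rightarrow> 'v set set" where
  "simplices K j = {\<sigma> \<in> K. card \<sigma> = Suc j}"

definition abstract_complex :: "'v set set \<Rightarrow> bool" where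
  "abstract_complex K \<longleftrightarrow> finite K \<and> (\<forall>\<sigma>\<in>K. finite \<sigma> \<and> \<sigma> \<noteq> {})
     \<and> (\<forall>\<sigma>\<in>K. \<forall>\<tau>. \<tau> \<subseteq> \<sigma> \<and> \<tau> \<noteq> {} \<longrightarrow> \<tau> \<in> K)"

definition manifold_like :: "'v set set \<Rightarrow> nat \<Rightarrow> bool" where
  "manifold_like K n \<longleftrightarrow> abstract_complex K \<and> (\<forall>\<sigma>\<in>K. \<exists>s\<in>simplices K n. \<sigma> \<subseteq> s)"

text \<open>Incidence number [tau : sigma]: with sorted vertices v_0 < ... < v_j of sigma,
  removing v_i gives sign (-1)^i, multiplied by the orientation signs.\<close>
definition incidence :: "('v::linorder set \<Rightarrow> real) \<Rightarrow> 'v set \<Rightarrow> 'v set \<Rightarrow> real" where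
  "incidence ori \<tau> \<sigma> = (if \<tau> \<subseteq> \<sigma> \<and> finite \<sigma> \<and> card \<sigma> = Suc (card \<tau>)
     then ori \<tau> * ori \<sigma> * (-1) ^ card {w \<in> \<sigma>. w < the_elem (\<sigma> - \<tau>)} else 0)"

definition oriented :: "'v::linorder set set \<Rightarrow> nat \<Rightarrow> ('v set \<Rightarrow> real) \<Rightarrow> bool" where
  "oriented K n ori \<longleftrightarrow> (\<forall>\<sigma>\<in>K. ori \<sigma> = 1 \<or> ori \<sigma> = -1)
     \<and> (\<forall>\<tau>\<in>simplices K (n - 1). \<forall>\<sigma>1\<in>simplices K n. \<forall>\<sigma>2\<in>simplices K n.
          \<tau> \<subseteq> \<sigma>1 \<and> \<tau> \<subseteq> \<sigma>2 \<and> \<sigma>1 \<noteq> \<sigma>2 \<longrightarrow> incidence ori \<tau> \<sigma>1 = - incidence ori \<tau> \<sigma>2)"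

definition well_centered :: "'v set set \<Rightarrow> ('v \<Rightarrow> 'a::euclidean_space) \<Rightarrow> bool" where
  "well_centered K pos \<longleftrightarrow>
     (\<forall>\<sigma>\<in>K. inj_on pos \<sigma> \<and> \<not> affine_dependent (pos ` \<sigma>)
        \<and> (\<exists>c \<in> rel_interior (convex hull (pos ` \<sigma>)). \<exists>r. \<forall>v\<in>\<sigma>. dist c (pos v) = r))
   \<and> (\<forall>\<sigma>\<in>K. \<forall>\<tau>\<in>K. convex hull (pos ` \<sigma>) \<inter> convex hull (pos ` \<tau>) = convex hull (pos ` (\<sigma> \<inter> \<tau>)))"

definition boundary :: "'v set set \<Rightarrow> nat \<Rightarrow> 'v set set" where
  "boundary K n = {\<tau> \<in> K. \<exists>\<rho>\<in>simplices K (n - 1). \<tau> \<subseteq> \<rho> \<and> card {\<sigma> \<in> simplices K n. \<rho> \<subseteq> \<sigma>} = 1}"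

definition Omega :: "'v set set \<Rightarrow> nat \<Rightarrow> 'v dform set" where
  "Omega S j = {\<alpha>. \<forall>s. s \<notin> simplices S j \<longrightarrow> \<alpha> s = 0}"

text \<open>Interior dual m-forms: functions on the cells star_i sigma^(n-m).\<close>
definition Omega_dual_i :: "'v set set \<Rightarrow> nat \<Rightarrow> nat \<Rightarrow> 'v dform set" where
  "Omega_dual_i K n m = Omega K (n - m)"

text \<open>Boundary dual m-forms: functions on the cells star_b tau^(n-1-m), tau in boundary.\<close>
definition Omega_dual_b :: "'v set set \<Rightarrow> nat \<Rightarrow> nat \<Rightarrow> 'v dform set" where
  "Omega_dual_b K n m = Omega (boundary K n) (n - 1 - m)"

definition dprim :: "'v::linorder set set \<Rightarrow> ('v set \<Rightarrow> real) \<Rightarrow> nat \<Rightarrow> 'v dform \<Rightarrow> 'v dform" where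
  "dprim K ori j \<alpha> = (\<lambda>\<sigma>. if \<sigma> \<in> simplices K j
      then (\<Sum>\<tau>\<in>simplices K (j - 1). incidence ori \<tau> \<sigma> * \<alpha> \<tau>) else 0)"

definition d_i :: "'v::linorder set set \<Rightarrow> ('v set \<Rightarrow> real) \<Rightarrow> nat \<Rightarrow> nat \<Rightarrow> 'v dform \<Rightarrow> 'v dform" where
  "d_i K ori n m \<beta> = (\<lambda>\<sigma>. if \<sigma> \<in> simplices K (n - m - 1)
      then (-1) ^ (n - m) * (\<Sum>s\<in>simplices K (n - m). incidence ori \<sigma> s * \<beta> s) else 0)"

definition d_b :: "'v set set \<Rightarrow> nat \<Rightarrow> nat \<Rightarrow> 'v dform \<Rightarrow> 'v dform" where
  "d_b K n m \<beta> = (\<lambda>\<sigma>. if \<sigma> \<in> simplices K (n - m - 1) \<and> \<sigma> \<in> boundary K n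
      then (-1) ^ (n - m - 1) * \<beta> \<sigma> else 0)"

definition restrict_b :: "'v set set \<Rightarrow> nat \<Rightarrow> nat \<Rightarrow> 'v dform \<Rightarrow> 'v dform" where
  "restrict_b K n j \<alpha> = (\<lambda>\<sigma>. if \<sigma> \<in> simplices (boundary K n) j then \<alpha> \<sigma> else 0)"

text \<open>Wedge pairings.  wedge_pd: primal j-form wedge dual (n-j)-form over K;
  wedge_dp: dual (n-j)-form wedge primal j-form over K;
  wedge_bd: boundary primal j-form wedge boundary dual (n-1-j)-form over the boundary.\<close>
definition wedge_pd :: "'v set set \<Rightarrow> nat \<Rightarrow> 'v dform \<Rightarrow> 'v dform \<Rightarrow> real" where
  "wedge_pd K j \<alpha> \<beta> = (\<Sum>\<sigma>\<in>simplices K j. \<alpha> \<sigma> * \<beta> \<sigma>)"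

definition wedge_dp :: "'v set set \<Rightarrow> nat \<Rightarrow> nat \<Rightarrow> 'v dform \<Rightarrow> 'v dform \<Rightarrow> real" where
  "wedge_dp K n j \<beta> \<alpha> = (-1) ^ (j * (n - j)) * wedge_pd K j \<alpha> \<beta>"

definition wedge_bd :: "'v set set \<Rightarrow> nat \<Rightarrow> nat \<Rightarrow> 'v dform \<Rightarrow> 'v dform \<Rightarrow> real" where
  "wedge_bd K n j \<alpha> \<gamma> = (\<Sum>\<tau>\<in>simplices (boundary K n) j. \<alpha> \<tau> * \<gamma> \<tau>)"

type_synonym 'v flow_effort = "('v dform \<times> 'v dform \<times> 'v dform) \<times> ('v dform \<times> 'v dform \<times> 'v dform)"

definition bond_space :: "'v set set \<Rightarrow> nat \<Rightarrow> nat \<Rightarrow> nat \<Rightarrow> 'v flow_effort set" where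
  "bond_space K n p q =
     (Omega K p \<times> Omega_dual_i K n q \<times> Omega_dual_b K n (n - p))
   \<times> (Omega_dual_i K n (n - p) \<times> Omega K (n - q) \<times> Omega (boundary K n) (n - q))"

definition bform :: "'v set set \<Rightarrow> nat \<Rightarrow> nat \<Rightarrow> nat \<Rightarrow> 'v flow_effort \<Rightarrow> 'v flow_effort \<Rightarrow> real" where
  "bform K n p q x y = (case x of ((fp1, fq1, fb1), (ep1, eq1, eb1)) \<Rightarrow>
     case y of ((fp2, fq2, fb2), (ep2, eq2, eb2)) \<Rightarrow>
       wedge_dp K n p ep1 fp2 + wedge_pd K (n - q) eq1 fq2
     + wedge_dp K n p ep2 fp1 + wedge_pd K (n - q) eq2 fq1
     + wedge_bd K n (n - q) eb1 fb2 + wedge_bd K n (n - q) eb2 fb1)"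

definition Dirac_d :: "'v::linorder set set \<Rightarrow> ('v set \<Rightarrow> real) \<Rightarrow> nat \<Rightarrow> nat \<Rightarrow> nat \<Rightarrow> 'v flow_effort set" where
  "Dirac_d K ori n p q = {x \<in> bond_space K n p q. case x of ((fp, fq, fb), (ep, eq, eb)) \<Rightarrow>
       fp = (\<lambda>\<sigma>. (-1) ^ (p * q + 1) * dprim K ori p eq \<sigma>)
     \<and> fq = (\<lambda>\<sigma>. d_i K ori n (n - p) ep \<sigma> + d_b K n (n - p) fb \<sigma>)
     \<and> eb = (\<lambda>\<sigma>. (-1) ^ p * restrict_b K n (n - q) eq \<sigma>)}"

definition orth :: "'a set \<Rightarrow> ('a \<Rightarrow> 'a \<Rightarrow> real) \<Rightarrow> 'a set \<Rightarrow> 'a set" where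
  "orth V B D = {y \<in> V. \<forall>x\<in>D. B x y = 0}"

end

theory Submission
  imports Defs
begin

lemma swap_sum:
  "(\<Sum>s\<in>A. a s * (\<Sum>t\<in>B. c t s * b t)) = (\<Sum>t\<in>B. b t * (\<Sum>s\<in>A. c t s * (a s::real)))"
  unfolding sum_distrib_left
  by (subst sum.swap) (simp add: mult_ac)

lemma sign_lem: "(-1::real)^(Suc m * r) * (-1)^(Suc m * Suc r + 1) = - ((-1)^(Suc m))"
proof -
  have e: "Suc m * r + (Suc m * Suc r + 1) = 2*(Suc m*r) + Suc m + 1" by simp
  have "(-1::real)^(Suc m * r) * (-1)^(Suc m * Suc r + 1) = (-1)^(2*(Suc m*r) + Suc m + 1)"
    by (simp only: power_add[symmetric] e)
  also have "\<dots> = - ((-1)^(Suc m))" by (simp only: power_add power_mult) simp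
  finally show ?thesis .
qed

lemma bd_eq: "simplices (boundary K n) m = {\<tau> \<in> simplices K m. \<tau> \<in> boundary K n}"
  unfolding simplices_def boundary_def by auto

lemma sum_bd:
  assumes "finite K" shows "(\<Sum>\<tau>\<in>simplices K m. if \<tau> \<in> boundary K n then f \<tau> else 0) = (\<Sum>\<tau>\<in>simplices (boundary K n) m. f \<tau>)"
proof -
  have "finite (simplices K m)" using assms unfolding simplices_def by simp
  then show ?thesis unfolding bd_eq by (simp add: sum.inter_filter)
qed

lemma expand:
  fixes K :: "'v::linorder set set" and m r :: nat
  assumes fin: "finite K"
  defines "N \<equiv> Suc (m + r)"
  shows "bform K N (Suc m) (Suc r)
     ((\<lambda>\<sigma>. (-1)^(Suc m*Suc r+1) * dprim K ori (Suc m) eq1 \<sigma>, \<lambda>\<sigma>. d_i K ori N (N - Suc m) ep1 \<sigma> + d_b K N (N - Suc m) fb1 \<sigma>, fb1),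
      (ep1, eq1, \<lambda>\<sigma>. (-1)^(Suc m) * restrict_b K N (N - Suc r) eq1 \<sigma>))
     ((fp2,fq2,fb2),(ep2,eq2,eb2))
   = (\<Sum>s\<in>simplices K (Suc m). ep1 s * ((-1)^(Suc m * r) * fp2 s + (-1)^(Suc m) * (\<Sum>\<tau>\<in>simplices K m. incidence ori \<tau> s * eq2 \<tau>)))
   + (\<Sum>\<tau>\<in>simplices K m. eq1 \<tau> * (fq2 \<tau> - (-1)^(Suc m) * (\<Sum>s\<in>simplices K (Suc m). incidence ori \<tau> s * ep2 s)))
   + (\<Sum>\<tau>\<in>simplices (boundary K N) m. eq1 \<tau> * ((-1)^(Suc m) * fb2 \<tau>))
   + (\<Sum>\<tau>\<in>simplices (boundary K N) m. fb1 \<tau> * (eb2 \<tau> - (-1)^(Suc m) * eq2 \<tau>))"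
proof -
  let ?P = "simplices K (Suc m)" and ?Q = "simplices K m" and ?B = "simplices (boundary K N) m"
  have nr: "N - Suc m = r" "N - Suc r = m" "N - r = Suc m" "N - r - 1 = m" unfolding N_def by auto
  have T1: "wedge_dp K N (Suc m) ep1 fp2 = (\<Sum>s\<in>?P. ep1 s * ((-1)^(Suc m * r) * fp2 s))"
    unfolding wedge_dp_def wedge_pd_def nr by (simp add: sum_distrib_left mult_ac)
  have T2: "wedge_pd K (N - Suc r) eq1 fq2 = (\<Sum>\<tau>\<in>?Q. eq1 \<tau> * fq2 \<tau>)"
    unfolding wedge_pd_def nr ..
  have T3: "wedge_dp K N (Suc m) ep2 (\<lambda>\<sigma>. (-1)^(Suc m*Suc r+1) * dprim K ori (Suc m) eq1 \<sigma>)
      = - ((-1)^(Suc m)) * (\<Sum>\<tau>\<in>?Q. eq1 \<tau> * (\<Sum>s\<in>?P. incidence ori \<tau> s * ep2 s))"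
  proof -
    have c: "(\<Sum>\<sigma>\<in>?P. dprim K ori (Suc m) eq1 \<sigma> * ep2 \<sigma>) = (\<Sum>s\<in>?P. ep2 s * (\<Sum>\<tau>\<in>?Q. incidence ori \<tau> s * eq1 \<tau>))"
      by (rule sum.cong) (simp_all add: dprim_def)
    have "wedge_dp K N (Suc m) ep2 (\<lambda>\<sigma>. (-1)^(Suc m*Suc r+1) * dprim K ori (Suc m) eq1 \<sigma>)
      = (-1)^(Suc m * r) * (-1)^(Suc m*Suc r+1) * (\<Sum>s\<in>?P. ep2 s * (\<Sum>\<tau>\<in>?Q. incidence ori \<tau> s * eq1 \<tau>))"
      unfolding wedge_dp_def wedge_pd_def nr
      by (simp only: sum_distrib_left[symmetric] mult.assoc c)
    also have "\<dots> = - ((-1)^(Suc m)) * (\<Sum>\<tau>\<in>?Q. eq1 \<tau> * (\<Sum>s\<in>?P. incidence ori \<tau> s * ep2 s))"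
      by (subst swap_sum) (simp only: sign_lem)
    finally show ?thesis .
  qed
  have T4: "wedge_pd K (N - Suc r) eq2 (\<lambda>\<sigma>. d_i K ori N (N - Suc m) ep1 \<sigma> + d_b K N (N - Suc m) fb1 \<sigma>)
     = (-1)^(Suc m) * (\<Sum>s\<in>?P. ep1 s * (\<Sum>\<tau>\<in>?Q. incidence ori \<tau> s * eq2 \<tau>))
       - (-1)^(Suc m) * (\<Sum>\<tau>\<in>?B. fb1 \<tau> * eq2 \<tau>)"
  proof -
    have "wedge_pd K (N - Suc r) eq2 (\<lambda>\<sigma>. d_i K ori N (N - Suc m) ep1 \<sigma> + d_b K N (N - Suc m) fb1 \<sigma>)
      = (\<Sum>\<tau>\<in>?Q. eq2 \<tau> * ((-1)^(Suc m) * (\<Sum>s\<in>?P. incidence ori \<tau> s * ep1 s)))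
        + (\<Sum>\<tau>\<in>?Q. if \<tau> \<in> boundary K N then eq2 \<tau> * ((-1)^m * fb1 \<tau>) else 0)"
    proof -
      have e: "\<And>\<tau>. \<tau> \<in> ?Q \<Longrightarrow> eq2 \<tau> * (d_i K ori N (N - Suc m) ep1 \<tau> + d_b K N (N - Suc m) fb1 \<tau>)
         = eq2 \<tau> * ((-1)^(Suc m) * (\<Sum>s\<in>?P. incidence ori \<tau> s * ep1 s))
           + (if \<tau> \<in> boundary K N then eq2 \<tau> * ((-1)^m * fb1 \<tau>) else 0)"
        by (simp add: d_i_def d_b_def nr distrib_left right_diff_distrib)
      show ?thesis unfolding wedge_pd_def nr sum.distrib[symmetric]
        by (rule sum.cong[OF refl e[unfolded nr]])
    qed
    also have "\<dots> = (-1)^(Suc m) * (\<Sum>s\<in>?P. ep1 s * (\<Sum>\<tau>\<in>?Q. incidence ori \<tau> s * eq2 \<tau>))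
       - (-1)^(Suc m) * (\<Sum>\<tau>\<in>?B. fb1 \<tau> * eq2 \<tau>)"
    proof -
      have a: "(\<Sum>\<tau>\<in>?Q. eq2 \<tau> * ((-1)^(Suc m) * (\<Sum>s\<in>?P. incidence ori \<tau> s * ep1 s)))
         = (-1)^(Suc m) * (\<Sum>\<tau>\<in>?Q. eq2 \<tau> * (\<Sum>s\<in>?P. incidence ori \<tau> s * ep1 s))"
        by (simp add: sum_distrib_left mult.left_commute)
      have b: "(\<Sum>\<tau>\<in>?B. eq2 \<tau> * ((-1)^m * fb1 \<tau>)) = - ((-1)^(Suc m) * (\<Sum>\<tau>\<in>?B. fb1 \<tau> * eq2 \<tau>))"
        by (simp add: sum_distrib_left mult_ac sum_negf[symmetric])
      show ?thesis unfolding sum_bd[OF fin] a b swap_sum[of ep1] by simp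
    qed
    finally show ?thesis .
  qed
  have T5: "wedge_bd K N (N - Suc r) (\<lambda>\<sigma>. (-1)^(Suc m) * restrict_b K N (N - Suc r) eq1 \<sigma>) fb2
      = (\<Sum>\<tau>\<in>?B. eq1 \<tau> * ((-1)^(Suc m) * fb2 \<tau>))"
    unfolding wedge_bd_def nr restrict_b_def by (simp add: mult_ac)
  have T6: "wedge_bd K N (N - Suc r) eb2 fb1 = (\<Sum>\<tau>\<in>?B. fb1 \<tau> * eb2 \<tau>)"
    unfolding wedge_bd_def nr by (simp add: mult_ac)
  have R1: "(\<Sum>s\<in>?P. ep1 s * ((-1)^(Suc m * r) * fp2 s + (-1)^(Suc m) * (\<Sum>\<tau>\<in>?Q. incidence ori \<tau> s * eq2 \<tau>)))
     = (\<Sum>s\<in>?P. ep1 s * ((-1)^(Suc m * r) * fp2 s)) + (-1)^(Suc m) * (\<Sum>s\<in>?P. ep1 s * (\<Sum>\<tau>\<in>?Q. incidence ori \<tau> s * eq2 \<tau>))"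
    by (simp add: distrib_left sum.distrib sum_distrib_left mult.left_commute)
  have R2: "(\<Sum>\<tau>\<in>?Q. eq1 \<tau> * (fq2 \<tau> - (-1)^(Suc m) * (\<Sum>s\<in>?P. incidence ori \<tau> s * ep2 s)))
     = (\<Sum>\<tau>\<in>?Q. eq1 \<tau> * fq2 \<tau>) - (-1)^(Suc m) * (\<Sum>\<tau>\<in>?Q. eq1 \<tau> * (\<Sum>s\<in>?P. incidence ori \<tau> s * ep2 s))"
    by (simp add: right_diff_distrib sum_subtractf sum_distrib_left mult.left_commute)
  have R4: "(\<Sum>\<tau>\<in>?B. fb1 \<tau> * (eb2 \<tau> - (-1)^(Suc m) * eq2 \<tau>))
     = (\<Sum>\<tau>\<in>?B. fb1 \<tau> * eb2 \<tau>) - (-1)^(Suc m) * (\<Sum>\<tau>\<in>?B. fb1 \<tau> * eq2 \<tau>)"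
    unfolding right_diff_distrib sum_subtractf sum_distrib_left by (simp only: mult.left_commute)
  show ?thesis
    unfolding bform_def prod.case T1 T2 T3 T4 T5 T6 R1 R2 R4
    by linarith
qed

definition mk :: "'v::linorder set set \<Rightarrow> ('v set \<Rightarrow> real) \<Rightarrow> nat \<Rightarrow> nat \<Rightarrow> nat \<Rightarrow> 'v dform \<Rightarrow> 'v dform \<Rightarrow> 'v dform \<Rightarrow> 'v flow_effort" where
  "mk K ori n p q ep eq fb = ((\<lambda>\<sigma>. (-1)^(p*q+1) * dprim K ori p eq \<sigma>, \<lambda>\<sigma>. d_i K ori n (n-p) ep \<sigma> + d_b K n (n-p) fb \<sigma>, fb),
      (ep, eq, \<lambda>\<sigma>. (-1)^p * restrict_b K n (n-q) eq \<sigma>))"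

lemma mk_in:
  fixes K :: "'v::linorder set set" and m r :: nat
  assumes "ep \<in> Omega K (Suc m)" "eq \<in> Omega K m" "fb \<in> Omega (boundary K (Suc (m+r))) m"
  shows "mk K ori (Suc (m+r)) (Suc m) (Suc r) ep eq fb \<in> Dirac_d K ori (Suc (m+r)) (Suc m) (Suc r)"
proof -
  have nr: "Suc (m+r) - Suc m = r" "Suc (m+r) - Suc r = m" "Suc (m+r) - r = Suc m" "Suc (m+r) - r - 1 = m"
    "Suc (m+r) - 1 - r = m" by auto
  show ?thesis using assms
    unfolding Dirac_d_def bond_space_def mk_def Omega_dual_i_def Omega_dual_b_def nr
    by (auto simp: Omega_def dprim_def d_i_def d_b_def restrict_b_def nr)
qed

lemma D_mem:
  fixes K :: "'v::linorder set set" and m r :: nat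
  shows "((fp,fq,fb),(ep,eq,eb)) \<in> Dirac_d K ori (Suc (m+r)) (Suc m) (Suc r) \<longleftrightarrow>
     ((fp,fq,fb),(ep,eq,eb)) \<in> bond_space K (Suc (m+r)) (Suc m) (Suc r) \<and>
     ((fp,fq,fb),(ep,eq,eb)) = mk K ori (Suc (m+r)) (Suc m) (Suc r) ep eq fb"
  unfolding Dirac_d_def mk_def by auto

lemma neg1_sq: "(-1::real)^k * (-1)^k = 1"
  by (simp flip: power_mult_distrib)

lemma sum_delta_mult:
  assumes "finite S" "\<sigma> \<in> S"
  shows "(\<Sum>s\<in>S. (if s = \<sigma> then 1 else 0) * (f s::real)) = f \<sigma>"
proof -
  have e: "(\<lambda>s. (if s = \<sigma> then 1 else 0) * f s) = (\<lambda>s. if s = \<sigma> then f s else 0)" by auto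
  show ?thesis using assms unfolding e by (simp only: sum.delta if_True)
qed

lemma core:
  fixes K :: "'v::linorder set set" and m r :: nat
  assumes fin: "finite K"
  shows "Dirac_d K ori (Suc (m+r)) (Suc m) (Suc r)
     = orth (bond_space K (Suc (m+r)) (Suc m) (Suc r)) (bform K (Suc (m+r)) (Suc m) (Suc r)) (Dirac_d K ori (Suc (m+r)) (Suc m) (Suc r))"
    (is "?D = orth ?V ?b ?D")
proof -
  define N where "N = Suc (m+r)"
  let ?P = "simplices K (Suc m)" and ?Q = "simplices K m" and ?B = "simplices (boundary K N) m"
  let ?c = "(-1::real)^(Suc m)" and ?s = "(-1::real)^(Suc m * r)"
  have nr: "N - Suc m = r" "N - Suc r = m" "N - r = Suc m" "N - r - 1 = m" "N - 1 - r = m"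
    unfolding N_def by auto
  have finP: "finite ?P" and finQ: "finite ?Q" using fin unfolding simplices_def by auto
  have finB: "finite ?B" using finQ unfolding bd_eq by simp
  have BQ: "\<And>\<tau>. \<tau> \<in> ?B \<longleftrightarrow> \<tau> \<in> ?Q \<and> \<tau> \<in> boundary K N" unfolding bd_eq by simp
  have sg: "?s * (-1)^(Suc m * Suc r + 1) = - ?c" by (rule sign_lem)
  note ex = expand[OF fin, of m r, folded N_def, folded mk_def]
  show ?thesis
  proof (rule set_eqI, rule iffI)
    fix y assume yD: "y \<in> ?D"
    obtain fp2 fq2 fb2 ep2 eq2 eb2 where y: "y = ((fp2,fq2,fb2),(ep2,eq2,eb2))" by (cases y) auto
    have yV: "y \<in> ?V" and ymk: "y = mk K ori N (Suc m) (Suc r) ep2 eq2 fb2"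
      using yD unfolding y D_mem N_def by auto
    have fp2: "\<And>s. s \<in> ?P \<Longrightarrow> fp2 s = (-1)^(Suc m * Suc r + 1) * (\<Sum>\<tau>\<in>?Q. incidence ori \<tau> s * eq2 \<tau>)"
      using ymk unfolding y mk_def by (auto simp: dprim_def)
    have fq2: "\<And>\<tau>. \<tau> \<in> ?Q \<Longrightarrow> fq2 \<tau> = ?c * (\<Sum>s\<in>?P. incidence ori \<tau> s * ep2 s) + (if \<tau> \<in> boundary K N then (-1)^m * fb2 \<tau> else 0)"
      using ymk unfolding y mk_def by (auto simp: d_i_def d_b_def nr)
    have eb2: "\<And>\<tau>. \<tau> \<in> ?B \<Longrightarrow> eb2 \<tau> = ?c * eq2 \<tau>"
      using ymk unfolding y mk_def by (auto simp: restrict_b_def nr)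
    show "y \<in> orth ?V ?b ?D"
      unfolding orth_def
    proof (intro CollectI conjI ballI yV)
      fix x assume xD: "x \<in> ?D"
      obtain fp1 fq1 fb1 ep1 eq1 eb1 where x: "x = ((fp1,fq1,fb1),(ep1,eq1,eb1))" by (cases x) auto
      have xmk: "x = mk K ori N (Suc m) (Suc r) ep1 eq1 fb1"
        using xD unfolding x D_mem N_def by auto
      have S1: "(\<Sum>s\<in>?P. ep1 s * (?s * fp2 s + ?c * (\<Sum>\<tau>\<in>?Q. incidence ori \<tau> s * eq2 \<tau>))) = 0"
      proof (rule sum.neutral, rule ballI)
        fix s assume s: "s \<in> ?P"
        have "?s * fp2 s = (?s * (-1)^(Suc m * Suc r + 1)) * (\<Sum>\<tau>\<in>?Q. incidence ori \<tau> s * eq2 \<tau>)"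
          unfolding fp2[OF s] by (simp only: mult.assoc)
        also have "\<dots> = - ?c * (\<Sum>\<tau>\<in>?Q. incidence ori \<tau> s * eq2 \<tau>)" unfolding sg ..
        finally show "ep1 s * (?s * fp2 s + ?c * (\<Sum>\<tau>\<in>?Q. incidence ori \<tau> s * eq2 \<tau>)) = 0" by simp
      qed
      have S2: "(\<Sum>\<tau>\<in>?Q. eq1 \<tau> * (fq2 \<tau> - ?c * (\<Sum>s\<in>?P. incidence ori \<tau> s * ep2 s)))
          = (\<Sum>\<tau>\<in>?Q. if \<tau> \<in> boundary K N then eq1 \<tau> * ((-1)^m * fb2 \<tau>) else 0)"
        by (rule sum.cong) (simp_all add: fq2)
      have S3: "(\<Sum>\<tau>\<in>?B. eq1 \<tau> * ((-1)^m * fb2 \<tau>)) + (\<Sum>\<tau>\<in>?B. eq1 \<tau> * (?c * fb2 \<tau>)) = 0"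
        by (simp add: sum.distrib[symmetric])
      have S4: "(\<Sum>\<tau>\<in>?B. fb1 \<tau> * (eb2 \<tau> - ?c * eq2 \<tau>)) = 0"
        by (rule sum.neutral) (simp add: eb2)
      show "?b x y = 0"
        unfolding N_def[symmetric] xmk y ex S2 sum_bd[OF fin] S4
        using S1 S3 by linarith
    qed
  next
    fix y assume yO: "y \<in> orth ?V ?b ?D"
    obtain fp2 fq2 fb2 ep2 eq2 eb2 where y: "y = ((fp2,fq2,fb2),(ep2,eq2,eb2))" by (cases y) auto
    have yV: "y \<in> ?V" and h0: "\<And>x. x \<in> ?D \<Longrightarrow> ?b x y = 0" using yO unfolding orth_def by auto
    have h: "\<And>ep eq fb. ep \<in> Omega K (Suc m) \<Longrightarrow> eq \<in> Omega K m \<Longrightarrow> fb \<in> Omega (boundary K N) m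
       \<Longrightarrow> bform K N (Suc m) (Suc r) (mk K ori N (Suc m) (Suc r) ep eq fb) y = 0"
      using h0 mk_in unfolding N_def by blast
    define \<Delta> :: "'v set \<Rightarrow> 'v dform" where "\<Delta> \<sigma> = (\<lambda>x. if x = \<sigma> then 1 else 0)" for \<sigma>
    have z: "(\<lambda>_. 0) \<in> Omega S j" for S :: "'v set set" and j unfolding Omega_def by simp
    have dl: "\<Delta> \<sigma> \<in> Omega S j" if "\<sigma> \<in> simplices S j" for S \<sigma> j
      using that unfolding Omega_def \<Delta>_def by auto
    have fp2O: "fp2 \<in> Omega K (Suc m)" and fq2O: "fq2 \<in> Omega K m" and eb2O: "eb2 \<in> Omega (boundary K N) m"
      using yV unfolding y bond_space_def Omega_dual_i_def N_def by auto
    have A: "?s * fp2 s + ?c * (\<Sum>\<tau>\<in>?Q. incidence ori \<tau> s * eq2 \<tau>) = 0" if s: "s \<in> ?P" for s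
      using h[OF dl[OF s] z z] unfolding y ex \<Delta>_def sum_delta_mult[OF finP s] by simp
    have Bq: "fq2 \<tau> - ?c * (\<Sum>s\<in>?P. incidence ori \<tau> s * ep2 s) + (if \<tau> \<in> boundary K N then ?c * fb2 \<tau> else 0) = 0"
      if t: "\<tau> \<in> ?Q" for \<tau>
    proof -
      have "(\<Sum>x\<in>?B. (if x = \<tau> then 1 else 0) * (?c * fb2 x)) = (if \<tau> \<in> boundary K N then ?c * fb2 \<tau> else 0)"
      proof (cases "\<tau> \<in> boundary K N")
        case True
        then have "\<tau> \<in> ?B" using BQ t by simp
        then show ?thesis using True by (simp only: sum_delta_mult[OF finB] if_True)
      next
        case False
        then have "\<tau> \<notin> ?B" using BQ t by simp
        then show ?thesis using False by (intro trans[OF sum.neutral]) auto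
      qed
      then show ?thesis
        using h[OF z dl[OF t] z] unfolding y ex \<Delta>_def sum_delta_mult[OF finQ t] by simp
    qed
    have C: "eb2 \<tau> - ?c * eq2 \<tau> = 0" if t: "\<tau> \<in> ?B" for \<tau>
      using h[OF z z dl[OF t]] unfolding y ex \<Delta>_def sum_delta_mult[OF finB t] by simp
    have t: "(-1::real)^(Suc m * Suc r + 1) = - ?c * ?s"
    proof -
      have "(-1::real)^(Suc m * Suc r + 1) = (?s * ?s) * (-1)^(Suc m * Suc r + 1)" by (simp only: neg1_sq mult_1)
      also have "\<dots> = ?s * (?s * (-1)^(Suc m * Suc r + 1))" by (simp only: mult.assoc)
      also have "\<dots> = - ?c * ?s" unfolding sg by simp
      finally show ?thesis .
    qed
    have E1: "fp2 = (\<lambda>\<sigma>. (-1)^(Suc m * Suc r + 1) * dprim K ori (Suc m) eq2 \<sigma>)"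
    proof
      fix \<sigma> show "fp2 \<sigma> = (-1)^(Suc m * Suc r + 1) * dprim K ori (Suc m) eq2 \<sigma>"
      proof (cases "\<sigma> \<in> ?P")
        case True
        have "fp2 \<sigma> = ?s * (?s * fp2 \<sigma>)" by (simp only: mult.assoc[symmetric] neg1_sq mult_1)
        also have "?s * fp2 \<sigma> = - ?c * (\<Sum>\<tau>\<in>?Q. incidence ori \<tau> \<sigma> * eq2 \<tau>)" using A[OF True] by simp
        finally show ?thesis using True unfolding t dprim_def by simp
      next
        case False then show ?thesis using fp2O unfolding Omega_def dprim_def by simp
      qed
    qed
    have E2: "fq2 = (\<lambda>\<sigma>. d_i K ori N (N - Suc m) ep2 \<sigma> + d_b K N (N - Suc m) fb2 \<sigma>)"
    proof
      fix \<tau> show "fq2 \<tau> = d_i K ori N (N - Suc m) ep2 \<tau> + d_b K N (N - Suc m) fb2 \<tau>"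
      proof (cases "\<tau> \<in> ?Q")
        case True
        then show ?thesis using Bq[OF True] unfolding d_i_def d_b_def nr by auto
      next
        case False then show ?thesis using fq2O unfolding Omega_def d_i_def d_b_def nr by simp
      qed
    qed
    have E3: "eb2 = (\<lambda>\<sigma>. (-1)^(Suc m) * restrict_b K N (N - Suc r) eq2 \<sigma>)"
    proof
      fix \<tau> show "eb2 \<tau> = (-1)^(Suc m) * restrict_b K N (N - Suc r) eq2 \<tau>"
      proof (cases "\<tau> \<in> ?B")
        case True
        then show ?thesis using C[OF True] unfolding restrict_b_def nr by simp
      next
        case False then show ?thesis using eb2O unfolding Omega_def restrict_b_def nr by simp
      qed
    qed
    show "y \<in> ?D"
      unfolding y D_mem using yV unfolding y N_def[symmetric] mk_def E1 E2 E3 by simp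
  qed
qed

theorem theorem3:
  fixes K :: "'v::linorder set set" and ori :: "'v set \<Rightarrow> real"
    and pos :: "'v \<Rightarrow> 'a::euclidean_space" and n p q :: nat
  assumes "manifold_like K n" and "oriented K n ori" and "well_centered K pos"
    and "p \<ge> 1" and "q \<ge> 1" and "p + q = n + 1"
  shows "Dirac_d K ori n p q = orth (bond_space K n p q) (bform K n p q) (Dirac_d K ori n p q)"
proof -
  have fin: "finite K" using assms(1) unfolding manifold_like_def abstract_complex_def by simp
  obtain m where m: "p = Suc m" using assms(4) by (cases p) auto
  obtain r where r: "q = Suc r" using assms(5) by (cases q) auto
  have nn: "n = Suc (m + r)" using assms(6) m r by simp
  show ?thesis unfolding m r nn by (rule core[OF fin])
qed

end
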